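(* Let $n\in\mathbb{N}$, $H\in\mathbb{R}^{n\times n}$, $W\succ 0$ in $\mathbb{R}^{n\times n}$, and $C=\mathrm{diag}(C_{11},\dots,C_{nn})$ diagonal with all $C_{ii}\ne 0$; assume $(H,C)$ observable and $(H,D)$ controllable where $W=DD^T$. Let $\Delta>0$ (the $\ell_2$-sensitivity $\Delta_{\ell_2}y$), let $\delta\in[10^{-5},10^{-1}]$, let $\epsilon>0$, and set $$\sigma=\frac{\Delta}{2\epsilon}\Big(K_\delta+\sqrt{K_\delta^2+2\epsilon}\Big),\qquad K_\delta:=\mathcal Q^{-1}(\delta),$$ and $V=\sigma^2 I_n$. Let $\Sigma$ be the unique positive semidefinite solution of $\Sigma = H\Sigma H^T - H\Sigma C^T(C\Sigma C^T+V)^{-1}C\Sigma H^T + W$ and $\overline\Sigma:=(C^TV^{-1}C+\Sigma^{-1})^{-1}$. Let $B_l,B_u$ satisfy $0<B_l<n\,\lambda_n(W)$ and $B_u>0$, and define $$\eta_2:=\left(\frac{B_l\,C_u^2}{\Delta^2\big(n-B_l\lambda_n(W)^{-1}\big)}\right)^{1/2},\qquad \eta_4:=\left(\frac{B_u\,C_l^2}{n\,\Delta^2}\right)^{1/2}.$$ If $$\frac18\left(\frac{1+\sqrt{36\eta_4+1}}{\eta_4}\right)^2\le\epsilon,$$ then $\mathrm{tr}\,\overline\Sigma\le B_u$; and if $\epsilon\le 1/\eta_2$, then $\mathrm{tr}\,\overline\Sigma\ge B_l$. In particular, if both inequalities on $\epsilon$ hold, then $B_l\le\mathrm{tr}\,\overline\Sigma\le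 B_u$.
   Context: $\mathcal Q(y)=\frac{1}{\sqrt{2\pi}}\int_y^\infty e^{-z^2/2}\,dz$ is the Gaussian tail function and $\mathcal Q^{-1}$ its inverse. The noise level $\sigma$ is the Gaussian-mechanism noise giving $(\epsilon,\delta)$-differential privacy of the state trajectory when $\Delta$ is the sensitivity $\Delta_{\ell_2}y=\sup\{\|Cx-Cx'\|_{\ell_2}:\|x-x'\|_{\ell_2}\le B\}$; for the claim, $\Delta$ may be any positive constant. $\mathrm{tr}\,\overline\Sigma$ is the steady-state mean squared a posteriori (estimation) error of the Kalman filter. $\lambda_n(W)$ is the smallest eigenvalue of $W$. $C_l:=C_{ll}$ with $l=\arg\min_i C_{ii}^2$ and $C_u:=C_{uu}$ with $u=\arg\max_i C_{ii}^2$. *)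

theory Defs
  imports "HOL-Analysis.Analysis"
begin

definition Qfun :: "real \<Rightarrow> real" where
  "Qfun y = (1 / sqrt (2 * pi)) * integral {y..} (\<lambda>z. exp (- (z^2) / 2))"

definition Qinv :: "real \<Rightarrow> real" where
  "Qinv d = (THE y. Qfun y = d)"

fun matpow :: "real^'n^'n \<Rightarrow> nat \<Rightarrow> real^'n^'n" where
  "matpow H 0 = mat 1"
| "matpow H (Suc k) = H ** matpow H k"

definition psd :: "real^'n^'n \<Rightarrow> bool" where
  "psd M \<longleftrightarrow> transpose M = M \<and> (\<forall>x. 0 \<le> x \<bullet> (M *v x))"

definition pd :: "real^'n^'n \<Rightarrow> bool" where
  "pd M \<longleftrightarrow> transpose M = M \<and> (\<forall>x. x \<noteq> 0 \<longrightarrow> 0 < x \<bullet> (M *v x))"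

definition lambda_min :: "real^'n^'n \<Rightarrow> real" where
  "lambda_min W = Min {l. \<exists>v. v \<noteq> 0 \<and> W *v v = l *\<^sub>R v}"

text \<open>Observability of (H,C): the observability matrix
  [C; C H; ...; C H^(n-1)] (n = CARD('n)) has full column rank n,
  i.e. its kernel is trivial.\<close>
definition observable :: "real^'n^'n \<Rightarrow> real^'n^'p \<Rightarrow> bool" where
  "observable H C \<longleftrightarrow>
     (\<forall>x. (\<forall>k<CARD('n). (C ** matpow H k) *v x = 0) \<longrightarrow> x = 0)"

text \<open>Controllability of (H,D): the controllability matrix
  [D, H D, ..., H^(n-1) D] has full row rank n, i.e. its columns span R^n.\<close>
definition controllable :: "real^'n^'n \<Rightarrow> real^'m^'n \<Rightarrow> bool" where
  "controllable H D \<longleftrightarrow>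
     span (\<Union>k\<in>{..<CARD('n)}. range (\<lambda>u. (matpow H k ** D) *v u)) = UNIV"

definition diagonal_mat :: "real^'n^'n \<Rightarrow> bool" where
  "diagonal_mat C \<longleftrightarrow> (\<forall>i j. i \<noteq> j \<longrightarrow> C $ i $ j = 0)"

end

theory Submission
  imports Defs
begin

lemma adj: "(x::real^'n) \<bullet> (A *v y) = (transpose A *v x) \<bullet> (y::real^'m)"
  by (simp add: dot_lmul_matrix)

lemma symq: "transpose A = A \<Longrightarrow> (x::real^'n) \<bullet> (A *v y) = y \<bullet> (A *v x)"
  by (metis adj inner_commute)

lemma scal_mat_vec: "((c::real) *\<^sub>R mat 1) *v (x::real^'n) = c *\<^sub>R x"
  by (simp add: vec_eq_iff matrix_vector_mult_def mat_def if_distrib if_distribR cong: if_cong)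

lemma CS:
  fixes A :: "real^'n^'n"
  assumes sym: "transpose A = A" and ps: "\<forall>x. 0 \<le> x \<bullet> (A *v x)"
  shows "(x \<bullet> (A *v y))^2 \<le> (x \<bullet> (A *v x)) * (y \<bullet> (A *v y))"
proof -
  define a where "a = x \<bullet> (A *v x)"
  define b where "b = x \<bullet> (A *v y)"
  define c where "c = y \<bullet> (A *v y)"
  have q: "0 \<le> a + 2*t*b + t^2*c" for t
  proof -
    have "0 \<le> (x + t *\<^sub>R y) \<bullet> (A *v (x + t *\<^sub>R y))" using ps by blast
    also have "\<dots> = a + t * (x \<bullet> (A *v y)) + t * (y \<bullet> (A *v x)) + t^2 * c"
      by (simp add: a_def c_def algebra_simps inner_add_left inner_add_right power2_eq_square)
    also have "y \<bullet> (A *v x) = b" using symq[OF sym] b_def by metis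
    finally show ?thesis by (simp add: b_def)
  qed
  have c0: "0 \<le> c" using ps c_def by blast
  show ?thesis
  proof (cases "c = 0")
    case True
    have "b = 0"
    proof (rule ccontr)
      assume "b \<noteq> 0"
      have "0 \<le> a + 2*(-(a+1)/(2*b))*b + (-(a+1)/(2*b))^2*c" by (rule q)
      with True \<open>b \<noteq> 0\<close> show False by (simp add: field_simps)
    qed
    then show ?thesis using True ps a_def by (simp add: b_def[symmetric] c_def[symmetric] a_def[symmetric])
  next
    case False
    with c0 have cp: "c > 0" by simp
    have "0 \<le> a + 2*(-b/c)*b + (-b/c)^2*c" by (rule q)
    hence "0 \<le> (a*c - b^2)/c" using cp by (simp add: field_simps power2_eq_square)
    hence "b^2 \<le> a*c" using cp by (simp add: divide_nonneg_pos zero_le_divide_iff)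
    thus ?thesis by (simp add: a_def b_def c_def)
  qed
qed

lemma psd_zero_kernel:
  fixes A :: "real^'n^'n"
  assumes sym: "transpose A = A" and ps: "\<forall>x. 0 \<le> x \<bullet> (A *v x)"
    and v: "v \<bullet> (A *v v) = 0"
  shows "A *v v = 0"
proof -
  have "((A *v v) \<bullet> (A *v v))^2 \<le> 0"
    using CS[OF sym ps, of "A *v v" v] v by simp
  thus ?thesis by simp
qed

lemma inv_props:
  fixes A :: "real^'n^'n"
  assumes "\<forall>x. A *v x = 0 \<longrightarrow> x = 0"
  shows "A ** matrix_inv A = mat 1 \<and> matrix_inv A ** A = mat 1"
proof -
  have "invertible A" using assms matrix_left_invertible_ker invertible_left_inverse by blast
  then obtain B where "A ** B = mat 1 \<and> B ** A = mat 1" unfolding invertible_def by blast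
  then show ?thesis unfolding matrix_inv_def by (rule someI)
qed

lemma inv_unique:
  fixes A :: "real^'n^'n"
  assumes "A ** B = mat 1" "B ** A = mat 1"
  shows "matrix_inv A = B"
proof -
  have "\<forall>x. A *v x = 0 \<longrightarrow> x = 0"
    by (metis assms(2) matrix_vector_mul_assoc matrix_vector_mul_lid matrix_vector_mult_0_right)
  from inv_props[OF this] have "matrix_inv A ** A = mat 1" by blast
  hence "matrix_inv A ** (A ** B) = B" by (metis matrix_mul_assoc matrix_mul_lid)
  thus ?thesis using assms by simp
qed

lemma eig_sym_orth:
  fixes W :: "real^'n^'n"
  assumes "transpose W = W" "W *v v = l *\<^sub>R v" "W *v w = k *\<^sub>R w" "l \<noteq> k"
  shows "v \<bullet> w = 0"
proof -
  have "v \<bullet> (W *v w) = w \<bullet> (W *v v)" by (rule symq[OF assms(1)])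
  hence "k * (v \<bullet> w) = l * (v \<bullet> w)" using assms by (simp add: inner_commute)
  thus ?thesis using assms(4) by simp
qed

lemma eig_finite:
  fixes W :: "real^'n^'n"
  assumes "transpose W = W"
  shows "finite {l. \<exists>v. v \<noteq> 0 \<and> W *v v = l *\<^sub>R v}" (is "finite ?S")
proof -
  define f where "f l = (SOME v. v \<noteq> 0 \<and> W *v v = l *\<^sub>R v)" for l
  have f: "f l \<noteq> 0 \<and> W *v f l = l *\<^sub>R f l" if "l \<in> ?S" for l
  proof -
    have "\<exists>v. v \<noteq> 0 \<and> W *v v = l *\<^sub>R v" using that by blast
    thus ?thesis unfolding f_def by (rule someI_ex)
  qed
  have inj: "inj_on f ?S"
  proof (rule inj_onI)
    fix l k assume lk: "l \<in> ?S" "k \<in> ?S" "f l = f k"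
    have a: "W *v f l = l *\<^sub>R f l" "f l \<noteq> 0" using f[OF lk(1)] by simp_all
    have b: "W *v f l = k *\<^sub>R f l" using f[OF lk(2)] lk(3) by simp
    from a b have "(l - k) *\<^sub>R f l = 0" by (simp add: scaleR_left_diff_distrib)
    thus "l = k" using a(2) by simp
  qed
  have "pairwise orthogonal (f ` ?S)"
  proof (rule pairwiseI)
    fix x y assume xy: "x \<in> f ` ?S" "y \<in> f ` ?S" "x \<noteq> y"
    then obtain l k where *: "l \<in> ?S" "k \<in> ?S" "x = f l" "y = f k" by blast
    hence "l \<noteq> k" using xy(3) by auto
    hence "f l \<bullet> f k = 0" using eig_sym_orth[OF assms] f[OF *(1)] f[OF *(2)] by blast
    thus "orthogonal x y" using * by (simp add: orthogonal_def)
  qed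
  moreover have "0 \<notin> f ` ?S" using f by fastforce
  ultimately have "independent (f ` ?S)" by (rule pairwise_orthogonal_independent)
  hence "finite (f ` ?S)" by (rule finiteI_independent)
  thus ?thesis using inj finite_imageD by blast
qed

lemma W_min:
  fixes W :: "real^'n^'n"
  assumes "pd W"
  shows "\<exists>m>0. (\<forall>x. m * (x \<bullet> x) \<le> x \<bullet> (W *v x)) \<and> lambda_min W \<le> m"
proof -
  have sym: "transpose W = W" and pos: "\<And>x. x \<noteq> 0 \<Longrightarrow> 0 < x \<bullet> (W *v x)"
    using assms unfolding pd_def by auto
  define q where "q x = x \<bullet> (W *v x)" for x :: "real^'n"
  have "continuous_on (sphere 0 1) q"
    unfolding q_def by (intro continuous_on_inner continuous_on_id linear_continuous_on matrix_vector_mul_bounded_linear)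
  moreover have "(axis undefined 1 :: real^'n) \<in> sphere 0 1" by (simp add: norm_axis_1)
  hence "sphere (0::real^'n) 1 \<noteq> {}" by auto
  ultimately obtain v where v: "v \<in> sphere 0 1" and vmin: "\<forall>y\<in>sphere 0 1. q v \<le> q y"
    using continuous_attains_inf[OF compact_sphere] by metis
  define m where "m = q v"
  have nv: "norm v = 1" using v by simp
  hence "v \<noteq> 0" by auto
  hence mpos: "m > 0" using pos m_def q_def by simp
  have qs: "q (c *\<^sub>R x) = c^2 * q x" for c x
    by (simp add: q_def algebra_simps power2_eq_square)
  have bound: "m * (x \<bullet> x) \<le> q x" for x
  proof (cases "x = 0")
    case True thus ?thesis by (simp add: q_def)
  next
    case False
    hence nx: "norm x > 0" by simp
    have "m \<le> q ((1/norm x) *\<^sub>R x)" using vmin m_def nx by simp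
    also have "\<dots> = q x / (norm x)^2" using qs by (simp add: power_divide divide_simps)
    finally have "m * (norm x)^2 \<le> q x" using nx by (simp add: field_simps)
    thus ?thesis by (simp add: power2_norm_eq_inner)
  qed
  define A where "A = W - m *\<^sub>R mat 1"
  have symA: "transpose A = A" using sym by (simp add: A_def transpose_def vec_eq_iff mat_def)
  have psA: "\<forall>x. 0 \<le> x \<bullet> (A *v x)"
    using bound by (simp add: A_def algebra_simps q_def inner_diff_right scal_mat_vec)
  have "v \<bullet> (A *v v) = 0"
    using nv by (simp add: A_def algebra_simps q_def m_def inner_diff_right scal_mat_vec power2_norm_eq_inner[symmetric])
  hence "A *v v = 0" by (rule psd_zero_kernel[OF symA psA])
  hence "W *v v = m *\<^sub>R v" by (simp add: A_def algebra_simps scal_mat_vec)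
  hence mS: "m \<in> {l. \<exists>v. v \<noteq> 0 \<and> W *v v = l *\<^sub>R v}" using \<open>v \<noteq> 0\<close> by blast
  have "lambda_min W \<le> m" unfolding lambda_min_def by (rule Min_le[OF eig_finite[OF sym] mS])
  moreover have "\<forall>x. m*(x \<bullet> x) \<le> x \<bullet> (W *v x)" using bound unfolding q_def by blast
  ultimately show ?thesis using mpos by blast
qed


lemma transpose_add': "transpose (A + B) = transpose A + transpose (B::real^'n^'m)"
  by (simp add: transpose_def vec_eq_iff)

lemma adjT: "(x::real^'n) \<bullet> (w v* C) = (C *v x) \<bullet> (w::real^'m)"
  by (metis dot_lmul_matrix inner_commute)

lemma diag_mv:
  assumes "diagonal_mat C"
  shows "(C *v x) $ i = C$i$i * (x::real^'n) $ i"
proof -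
  have "(\<Sum>j\<in>UNIV. C$i$j * x$j) = (\<Sum>j\<in>UNIV. if j = i then C$i$i * x$i else 0)"
    by (rule sum.cong) (use assms in \<open>auto simp: diagonal_mat_def\<close>)
  hence "(\<Sum>j\<in>UNIV. C$i$j * x$j) = C$i$i * x$i" by simp
  thus ?thesis by (simp add: matrix_vector_mult_def)
qed

lemma mat_axis: "((A::real^'n^'n) *v axis j 1) $ i = A$i$j"
  by (simp add: matrix_vector_mul_component inner_axis)

lemma axis_inner_comp: "axis i 1 \<bullet> (x::real^'n) = x $ i"
  by (simp add: inner_axis')

lemma main_matrix:
  fixes H W S C :: "real^'n^'n" and s m :: real
  assumes sW: "pd W" and C_diag: "diagonal_mat C" and C_nz: "\<forall>i. C $ i $ i \<noteq> 0"
    and s_pos: "s > 0" and S_psd: "psd S"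
    and ric: "S = H ** S ** transpose H
        - H ** S ** transpose C ** matrix_inv (C ** S ** transpose C + s *\<^sub>R mat 1)
            ** C ** S ** transpose H + W"
    and m_pos: "m > 0" and mW: "\<forall>x. m * (x \<bullet> x) \<le> x \<bullet> (W *v x)"
  defines "Mi \<equiv> matrix_inv (transpose C ** matrix_inv (s *\<^sub>R mat 1) ** C + matrix_inv S)"
  shows "\<And>i. Mi $ i $ i \<le> s / (C$i$i)^2" and "\<And>i. 1 / ((C$i$i)^2 / s + 1/m) \<le> Mi $ i $ i"
proof -
  have Ssym: "transpose S = S" and Sps: "\<forall>x. 0 \<le> x \<bullet> (S *v x)"
    using S_psd unfolding psd_def by auto
  define G where "G = C ** S ** transpose C + s *\<^sub>R mat 1"
  define Gi where "Gi = matrix_inv G"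
  have Gv: "G *v x = C *v (S *v (transpose C *v x)) + s *\<^sub>R x" for x
    by (simp add: G_def matrix_vector_mult_add_rdistrib matrix_vector_mul_assoc[symmetric] scal_mat_vec)
  have Gq: "x \<bullet> (G *v x) = (transpose C *v x) \<bullet> (S *v (transpose C *v x)) + s * (x \<bullet> x)" for x
    unfolding Gv by (simp add: inner_add_right adj[of x C])
  have "\<forall>x. G *v x = 0 \<longrightarrow> x = 0"
  proof (intro allI impI)
    fix x assume "G *v x = 0"
    hence "x \<bullet> (G *v x) = 0" by simp
    moreover have "0 \<le> (transpose C *v x) \<bullet> (S *v (transpose C *v x))" using Sps by blast
    ultimately have "s * (x \<bullet> x) \<le> 0" using Gq[of x] by linarith
    hence "x \<bullet> x \<le> 0" using s_pos by (simp add: mult_le_0_iff)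
    thus "x = 0" by (metis inner_gt_zero_iff not_less)
  qed
  hence GGi: "G ** Gi = mat 1" using inv_props unfolding Gi_def by blast
  have SW: "x \<bullet> (W *v x) \<le> x \<bullet> (S *v x)" for x
  proof -
    define w where "w = transpose H *v x"
    define y where "y = C *v (S *v w)"
    define u where "u = Gi *v y"
    define z where "z = transpose C *v u"
    have Sx: "S *v x = H *v (S *v w) - H *v (S *v z) + W *v x"
    proof -
      have "S *v x = (H ** S ** transpose H
        - H ** S ** transpose C ** Gi ** C ** S ** transpose H + W) *v x"
        using arg_cong[where f="\<lambda>M. M *v x", OF ric] unfolding Gi_def G_def .
      thus ?thesis
        by (simp only: matrix_vector_mult_add_rdistrib matrix_vector_mult_diff_rdistrib
            matrix_vector_mul_assoc[symmetric] w_def y_def u_def z_def)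
    qed
    have e1: "x \<bullet> (S *v x) = w \<bullet> (S *v w) - w \<bullet> (S *v z) + x \<bullet> (W *v x)"
      unfolding Sx by (simp add: inner_add_right inner_diff_right adj[of x H] w_def)
    have e2: "w \<bullet> (S *v z) = y \<bullet> u"
    proof -
      have "w \<bullet> (S *v z) = (S *v w) \<bullet> z" using adj[of w S z] Ssym by simp
      also have "\<dots> = y \<bullet> u" unfolding z_def y_def using adj[of "S *v w" "transpose C" u] by simp
      finally show ?thesis .
    qed
    have Gu: "G *v u = y" unfolding u_def by (simp add: matrix_vector_mul_assoc GGi)
    have e3: "y \<bullet> u = z \<bullet> (S *v z) + s * (u \<bullet> u)"
    proof -
      have "y \<bullet> u = u \<bullet> (G *v u)" using Gu by (simp add: inner_commute)
      thus ?thesis using Gq[of u] z_def by simp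
    qed
    have e4: "0 \<le> (w - z) \<bullet> (S *v (w - z))" using Sps by blast
    have e5: "(w - z) \<bullet> (S *v (w - z)) = w \<bullet> (S *v w) - 2 * (w \<bullet> (S *v z)) + z \<bullet> (S *v z)"
    proof -
      have "z \<bullet> (S *v w) = w \<bullet> (S *v z)" using symq[OF Ssym] by metis
      thus ?thesis by (simp add: inner_diff_left inner_diff_right matrix_vector_mult_diff_distrib)
    qed
    have "0 \<le> s * (u \<bullet> u)" using s_pos by simp
    with e1 e2 e3 e4 e5 show ?thesis by linarith
  qed
  have Sm: "m * (x \<bullet> x) \<le> x \<bullet> (S *v x)" for x using mW SW order_trans by blast
  have "\<forall>x. S *v x = 0 \<longrightarrow> x = 0"
  proof (intro allI impI)
    fix x assume "S *v x = 0"
    hence "m * (x \<bullet> x) \<le> 0" using Sm[of x] by simp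
    hence "x \<bullet> x \<le> 0" using m_pos by (simp add: mult_le_0_iff)
    thus "x = 0" by (metis inner_gt_zero_iff not_less)
  qed
  from inv_props[OF this] have SSi: "S ** matrix_inv S = mat 1" and SiS: "matrix_inv S ** S = mat 1"
    by auto
  define Si where "Si = matrix_inv S"
  have Sisym: "transpose Si = Si"
  proof -
    have "transpose (Si ** S) = mat 1" using SiS Si_def by simp
    hence a: "S ** transpose Si = mat 1" by (simp add: matrix_transpose_mul Ssym)
    have "transpose Si = (Si ** S) ** transpose Si" using SiS Si_def by simp
    also have "\<dots> = Si" using a by (simp add: matrix_mul_assoc[symmetric])
    finally show ?thesis .
  qed
  have Si_nn: "0 \<le> x \<bullet> (Si *v x)" and Si_ub: "x \<bullet> (Si *v x) \<le> (x \<bullet> x) / m" for x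
  proof -
    define y where "y = Si *v x"
    have Sy: "S *v y = x" unfolding y_def Si_def by (simp add: matrix_vector_mul_assoc SSi)
    have xy: "x \<bullet> y = y \<bullet> (S *v y)" using Sy by (simp add: inner_commute)
    show "0 \<le> x \<bullet> (Si *v x)" using xy Sps y_def by simp
    have "m * (norm y)^2 \<le> x \<bullet> y" using Sm[of y] xy by (simp add: power2_norm_eq_inner)
    also have "\<dots> \<le> norm x * norm y" by (rule norm_cauchy_schwarz)
    finally have a: "m * (norm y)^2 \<le> norm x * norm y" .
    have b: "m * norm y \<le> norm x"
    proof (cases "norm y = 0")
      case True thus ?thesis by simp
    next
      case False
      hence "norm y > 0" by simp
      with a show ?thesis by (simp add: power2_eq_square)
    qed
    have "x \<bullet> y \<le> norm x * norm y" by (rule norm_cauchy_schwarz)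
    also have "\<dots> \<le> norm x * (norm x / m)" using b m_pos by (intro mult_left_mono) (simp_all add: field_simps)
    also have "\<dots> = (x \<bullet> x) / m" by (simp add: power2_norm_eq_inner[symmetric] power2_eq_square)
    finally show "x \<bullet> (Si *v x) \<le> (x \<bullet> x) / m" unfolding y_def .
  qed
  have Vi: "matrix_inv (s *\<^sub>R mat 1) = (1/s) *\<^sub>R (mat 1 :: real^'n^'n)"
    by (rule inv_unique) (simp_all add: matrix_eq matrix_vector_mul_assoc[symmetric] scal_mat_vec s_pos less_imp_neq[OF s_pos, symmetric])
  define M where "M = transpose C ** matrix_inv (s *\<^sub>R mat 1) ** C + Si"
  have Mv: "M *v x = transpose C *v ((1/s) *\<^sub>R (C *v x)) + Si *v x" for x
    by (simp add: M_def Vi matrix_vector_mult_add_rdistrib matrix_vector_mul_assoc[symmetric] scal_mat_vec)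
  have Mq: "x \<bullet> (M *v x) = (1/s) * ((C *v x) \<bullet> (C *v x)) + x \<bullet> (Si *v x)" for x
    unfolding Mv by (simp add: inner_add_right adjT)
  have Msym: "transpose M = M"
    by (simp add: M_def Vi transpose_add' matrix_transpose_mul Sisym transpose_scalar matrix_mul_assoc)
  have Mps: "\<forall>x. 0 \<le> x \<bullet> (M *v x)" using Mq Si_nn s_pos by simp
  have "\<forall>x. M *v x = 0 \<longrightarrow> x = 0"
  proof (intro allI impI)
    fix x assume "M *v x = 0"
    hence "x \<bullet> (M *v x) = 0" by simp
    hence "(1/s) * ((C *v x) \<bullet> (C *v x)) \<le> 0" using Mq[of x] Si_nn[of x] by linarith
    hence "(C *v x) \<bullet> (C *v x) \<le> 0" using s_pos by (simp add: divide_le_0_iff)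
    hence "C *v x = 0" by (metis inner_gt_zero_iff not_less)
    hence "\<forall>i. C$i$i * x$i = 0" using diag_mv[OF C_diag] by (metis zero_index)
    thus "x = 0" using C_nz by (simp add: vec_eq_iff)
  qed
  from inv_props[OF this] have MMi: "M ** Mi = mat 1" unfolding Mi_def M_def Si_def by simp
  fix i
  define e where "e = (axis i 1 :: real^'n)"
  define z where "z = Mi *v e"
  have Mz: "M *v z = e" unfolding z_def by (simp add: matrix_vector_mul_assoc MMi)
  have zi: "z $ i = Mi $ i $ i" unfolding z_def e_def by (rule mat_axis)
  have zq: "z \<bullet> (M *v z) = z $ i" unfolding Mz e_def by (simp add: inner_axis)
  have "(1/s) * ((C *v z) $ i)^2 \<le> (1/s) * ((C *v z) \<bullet> (C *v z))"
  proof -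
    have "((C *v z) $ i)^2 \<le> (norm (C *v z))^2"
      using power_mono[OF component_le_norm_cart[of "C *v z" i] abs_ge_zero, of 2] by simp
    thus ?thesis using s_pos by (simp add: power2_norm_eq_inner divide_right_mono)
  qed
  also have "\<dots> \<le> z $ i" using Mq[of z] Si_nn[of z] zq by linarith
  finally have zlow: "(1/s) * (C$i$i)^2 * (z$i)^2 \<le> z $ i"
    by (simp add: diag_mv[OF C_diag] power_mult_distrib)
  have ci: "(C$i$i)^2 > 0" using C_nz by simp
  show "Mi $ i $ i \<le> s / (C$i$i)^2"
  proof (cases "z $ i \<le> 0")
    case True thus ?thesis using zi ci s_pos by (metis divide_pos_pos order_trans less_imp_le)
  next
    case False
    hence zp: "z $ i > 0" by simp
    from zlow have "(1/s) * (C$i$i)^2 * (z$i) * z$i \<le> 1 * z $ i" by (simp add: power2_eq_square mult.assoc)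
    hence "(1/s) * (C$i$i)^2 * (z$i) \<le> 1" using zp by (simp only: mult_le_cancel_right_pos)
    hence "(C$i$i)^2 * (z$i) \<le> s" using s_pos by (simp add: field_simps)
    thus ?thesis using zi ci by (simp add: field_simps mult.commute)
  qed
  have "(e \<bullet> (M *v z))^2 \<le> (e \<bullet> (M *v e)) * (z \<bullet> (M *v z))" by (rule CS[OF Msym Mps])
  hence cs: "1 \<le> (e \<bullet> (M *v e)) * z $ i" using Mz zq by (simp add: e_def axis_inner_comp)
  have Ce: "C *v e = C$i$i *\<^sub>R e"
    by (simp add: vec_eq_iff diag_mv[OF C_diag] e_def axis_def)
  have Mee: "e \<bullet> (M *v e) \<le> (C$i$i)^2 / s + 1/m"
  proof -
    have "e \<bullet> (M *v e) = (1/s) * (C$i$i)^2 + e \<bullet> (Si *v e)"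
      using Mq[of e] Ce by (simp add: e_def power2_eq_square axis_inner_comp)
    moreover have "e \<bullet> (Si *v e) \<le> 1/m" using Si_ub[of e] by (simp add: e_def axis_inner_comp)
    ultimately show ?thesis by simp
  qed
  have Mee_pos: "0 < (C$i$i)^2 / s + 1/m" using ci s_pos m_pos by (simp add: add_pos_pos)
  have zp: "z $ i > 0"
  proof (rule ccontr)
    assume "\<not> z $ i > 0"
    hence "(e \<bullet> (M *v e)) * z $ i \<le> 0" using Mps by (simp add: mult_nonneg_nonpos)
    thus False using cs by simp
  qed
  have "1 \<le> ((C$i$i)^2 / s + 1/m) * z $ i"
    using cs Mee zp by (meson order_trans mult_right_mono less_imp_le)
  thus "1 / ((C$i$i)^2 / s + 1/m) \<le> Mi $ i $ i" using zi Mee_pos by (simp add: field_simps)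
qed


definition gf :: "real \<Rightarrow> real" where "gf z = exp (- (z^2) / 2)"

lemma gf_pos: "gf z > 0" by (simp add: gf_def)

lemma gf_cont: "continuous_on S gf"
  unfolding gf_def by (intro continuous_intros) auto

lemma gf_le_exp: "gf z \<le> exp (y^2/2) * exp (- y * z)"
proof -
  have "- (z^2) / 2 \<le> y^2/2 + (- y * z)"
    using zero_le_power2[of "z - y"] by (simp add: power2_diff field_simps)
  hence "gf z \<le> exp (y^2/2 + (- y * z))" unfolding gf_def by (rule exp_mono)
  also have "\<dots> = exp (y^2/2) * exp (- y * z)" by (rule exp_add)
  finally show ?thesis .
qed

lemma gf_int: "gf integrable_on {a..}"
proof (rule measurable_bounded_by_integrable_imp_integrable_real)
  show "gf \<in> borel_measurable (lebesgue_on {a..})"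
    by (rule continuous_imp_measurable_on_sets_lebesgue[OF gf_cont]) (simp add: borel_closed)
  show "(\<lambda>z. exp (1/2) * exp (- 1 * z)) integrable_on {a..}"
    using integrable_on_cmult_left[OF integrable_on_exp_minus_to_infinity[of 1 a], of "exp (1/2)"] by simp
  show "\<bar>gf x\<bar> \<le> exp (1/2) * exp (- 1 * x)" for x
    using gf_le_exp[of x 1] gf_pos[of x] by simp
  show "{a..} \<in> sets lebesgue" by (simp add: borel_closed)
qed

lemma gf_split:
  assumes "a \<le> b"
  shows "integral {a..} gf = integral {a..b} gf + integral {b..} gf"
proof -
  have "(gf has_integral (integral {a..b} gf + integral {b..} gf)) ({a..b} \<union> {b..})"
  proof (rule has_integral_Un)
    show "(gf has_integral integral {a..b} gf) {a..b}"
      using integrable_continuous_interval[OF gf_cont] by (simp add: integrable_integral)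
    show "(gf has_integral integral {b..} gf) {b..}" using gf_int by (simp add: integrable_integral)
    have "{a..b} \<inter> {b..} = {b}" using assms by auto
    thus "negligible ({a..b} \<inter> {b..})" by simp
  qed
  moreover have "{a..b} \<union> {b..} = {a..}" using assms by auto
  ultimately show ?thesis by (simp add: integral_unique)
qed

lemma gf_seg_pos:
  assumes "a < b"
  shows "integral {a..b} gf > 0"
proof -
  define c where "c = exp (- (a^2 + b^2) / 2)"
  have "integral {a..b} (\<lambda>x. c) \<le> integral {a..b} gf"
  proof (rule integral_le)
    show "(\<lambda>x. c) integrable_on {a..b}" by (rule integrable_const_ivl)
    show "gf integrable_on {a..b}" using integrable_continuous_interval[OF gf_cont] .
    fix x assume "x \<in> {a..b}"
    hence "x^2 \<le> a^2 + b^2"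
    proof (cases "x \<ge> 0")
      case True
      hence "x^2 \<le> b^2" using \<open>x \<in> {a..b}\<close> by (intro power_mono) auto
      thus ?thesis using zero_le_power2[of a] by linarith
    next
      case False
      hence "(-x)^2 \<le> (-a)^2" using \<open>x \<in> {a..b}\<close> by (intro power_mono) auto
      hence "x^2 \<le> a^2" by simp
      thus ?thesis using zero_le_power2[of b] by linarith
    qed
    thus "c \<le> gf x" unfolding c_def gf_def by simp
  qed
  moreover have "integral {a..b} (\<lambda>x. c) > 0" using assms by (simp add: c_def)
  ultimately show ?thesis by linarith
qed

lemma Qfun_eq: "Qfun y = (1 / sqrt (2*pi)) * integral {y..} gf"
  unfolding Qfun_def gf_def by simp

lemma Qfun_strict: "a < b \<Longrightarrow> Qfun b < Qfun a"
  unfolding Qfun_eq using gf_split[of a b] gf_seg_pos[of a b] by (simp add: divide_strict_right_mono)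

lemma Qfun_cont: "continuous_on {a..b} Qfun"
proof -
  have "continuous_on {a..b} (\<lambda>y. (1 / sqrt (2*pi)) * (integral {y..b} gf + integral {b..} gf))"
    by (intro continuous_intros indefinite_integral_continuous_1' integrable_continuous_interval gf_cont)
  moreover have "Qfun y = (1 / sqrt (2*pi)) * (integral {y..b} gf + integral {b..} gf)" if "y \<in> {a..b}" for y
    using that gf_split[of y b] by (simp add: Qfun_eq)
  ultimately show ?thesis using continuous_on_cong by (metis (no_types, lifting))
qed

lemma exp1_bounds: "(1359/500) \<le> exp (1::real)" "exp (1::real) \<le> (27183/10000)"
proof -
  have h: "exp 1 - 5837465777 / 2147483648 \<le> inverse (2^32::real) \<and> -(exp 1 - 5837465777 / 2147483648) \<le> inverse (2^32::real)"
    using e_approx_32 by (simp only: abs_le_iff)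
  have "inverse (2^32::real) = 1/4294967296" by simp
  with h show "(1359/500) \<le> exp (1::real)" by linarith
  from h \<open>inverse (2^32::real) = 1/4294967296\<close> show "exp (1::real) \<le> (27183/10000)" by linarith
qed

lemma Qfun_1: "Qfun 1 > 1/10"
proof -
  define h where "h z = exp (1 - 3*z/2)" for z :: real
  have hint: "(h has_integral ((-2/3) * exp (1 - 3*2/2) - (-2/3) * exp (1 - 3*1/2))) {1..2}"
    unfolding h_def
    by (intro fundamental_theorem_of_calculus)
       (auto intro!: derivative_eq_intros simp flip: has_real_derivative_iff_has_vector_derivative)
  have "integral {1..2} h \<le> integral {1..2} gf"
  proof (rule integral_le)
    show "h integrable_on {1..2}" using hint by blast
    show "gf integrable_on {1..2}" using integrable_continuous_interval[OF gf_cont] .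
    fix x :: real assume "x \<in> {1..2}"
    hence "(x - 1) * (x - 2) \<le> 0" by (intro mult_nonneg_nonpos) auto
    hence "1 - 3*x/2 \<le> - (x^2) / 2" by (simp add: algebra_simps power2_eq_square)
    thus "h x \<le> gf x" unfolding h_def gf_def by simp
  qed
  also have "\<dots> \<le> integral {1..} gf"
    using gf_split[of 1 2] gf_int[of 2] by (simp add: integral_nonneg gf_pos less_imp_le)
  finally have I: "(2/3) * (exp (-1/2) - exp (-2)) \<le> integral {1..} gf"
    using integral_unique[OF hint] by (simp add: algebra_simps)
  have e1: "exp (-1/2::real) \<ge> (3/5)"
  proof -
    have "exp (1/2::real)^2 = exp 1" by (simp add: exp_double[symmetric])
    moreover have "(5/3::real)^2 = 25/9" by (simp add: power2_eq_square)
    ultimately have "exp (1/2::real)^2 \<le> (5/3)^2" using exp1_bounds(2) by linarith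
    hence "exp (1/2::real) \<le> 5/3" by (rule power2_le_imp_le) simp
    thus ?thesis by (simp add: exp_minus field_simps)
  qed
  have e2: "exp (-2::real) \<le> (7/50)"
  proof -
    have "exp (2::real) = exp 1 ^ 2" by (simp add: exp_double[symmetric] power2_eq_square exp_add[symmetric])
    hence "exp (2::real) \<ge> (1359/500)^2" using exp1_bounds by (simp add: power_mono)
    moreover have "(1359/500::real)^2 \<ge> 50/7" by (simp add: power2_eq_square)
    ultimately have "exp (2::real) \<ge> 50/7" by linarith
    thus ?thesis by (simp add: exp_minus field_simps)
  qed
  have d: "exp (-1/2::real) - exp (-2) \<ge> 23/50" using e1 e2 by linarith
  have "(2/3) * (exp (-1/2::real) - exp (-2)) \<ge> (2/3) * (23/50)"
    by (rule mult_left_mono[OF d]) simp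
  hence I2: "integral {1..} gf \<ge> (23/75)" using I by linarith
  have "sqrt (2*pi) \<le> 3"
  proof -
    have "2*pi \<le> 3^2" using pi_less_4 by simp
    hence "sqrt (2*pi) \<le> sqrt (3^2)" by (rule real_sqrt_le_mono)
    thus ?thesis by simp
  qed
  moreover have "sqrt (2*pi) > 0" by simp
  ultimately have "1 / sqrt (2*pi) \<ge> 1/3" by (simp add: field_simps)
  hence "Qfun 1 \<ge> (1/3) * (23/75)" unfolding Qfun_eq using I2 by (intro mult_mono) auto
  thus ?thesis by simp
qed

lemma Qfun_45: "Qfun (9/2) < 1/100000"
proof -
  define y :: real where "y = 9/2"
  have "integral {y..} gf \<le> integral {y..} (\<lambda>z. exp (y^2/2) * exp (- y * z))"
  proof (rule integral_le)
    show "gf integrable_on {y..}" by (rule gf_int)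
    show "(\<lambda>z. exp (y^2/2) * exp (- y * z)) integrable_on {y..}"
      using integrable_on_cmult_left[OF integrable_on_exp_minus_to_infinity[of y y], of "exp (y^2/2)"] by (simp add: y_def)
    show "gf x \<le> exp (y^2/2) * exp (- y * x)" for x by (rule gf_le_exp)
  qed
  also have "\<dots> = exp (y^2/2) * (exp (- y * y) / y)"
    using has_integral_exp_minus_to_infinity[of y y] by (simp add: y_def integral_unique)
  also have "\<dots> = (exp (y^2/2) * exp (- (y^2/2))) * exp (- (y^2/2)) / y"
  proof -
    have "exp (- y * y) = exp (-(y^2/2)) * exp (-(y^2/2))" by (simp add: exp_add[symmetric] power2_eq_square)
    thus ?thesis by simp
  qed
  also have "\<dots> = exp (- (y^2/2)) / y" by (simp add: exp_minus)
  finally have I: "integral {y..} gf \<le> exp (- (y^2/2)) / y" .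
  have "exp (10::real) = exp 1 ^ 10" using exp_of_nat_mult[of 10 "1::real"] by simp
  hence "exp (10::real) \<ge> (1359/500) ^ 10" using exp1_bounds by (simp add: power_mono)
  moreover have "exp (10::real) \<le> exp (y^2/2)" by (simp add: y_def power2_eq_square)
  ultimately have "exp (y^2/2) \<ge> (1359/500) ^ 10" by linarith
  hence ey: "exp (- (y^2/2)) \<le> 1 / (1359/500) ^ 10" by (simp add: exp_minus field_simps)
  have "sqrt (2*pi) \<ge> 2"
  proof -
    have "2^2 \<le> 2*pi" using pi_gt3 by simp
    thus ?thesis by (simp add: real_le_rsqrt)
  qed
  have "Qfun y \<le> (1/2) * (exp (- (y^2/2)) / y)"
    unfolding Qfun_eq
  proof (rule mult_mono)
    show "1 / sqrt (2 * pi) \<le> 1/2" using \<open>sqrt (2*pi) \<ge> 2\<close> by (simp add: field_simps)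
  qed (use I in \<open>auto intro: integral_nonneg simp: gf_int gf_pos less_imp_le\<close>)
  also have "\<dots> \<le> (1/2) * ((1 / (1359/500) ^ 10) / y)" using ey by (simp add: y_def divide_right_mono)
  also have "\<dots> < 1/100000" by (simp add: y_def eval_nat_numeral)
  finally show ?thesis by (simp add: y_def)
qed

lemma Qinv_bounds:
  assumes "1/100000 \<le> d" "d \<le> 1/10"
  shows "1 \<le> Qinv d \<and> Qinv d \<le> 9/2"
proof -
  have "\<exists>x. 1 \<le> x \<and> x \<le> 9/2 \<and> Qfun x = d"
    by (rule IVT2') (use assms Qfun_1 Qfun_45 Qfun_cont in auto)
  then obtain x where x: "1 \<le> x" "x \<le> 9/2" "Qfun x = d" by blast
  have uniq: "y = x" if "Qfun y = d" for y
    using Qfun_strict[of x y] Qfun_strict[of y x] that x(3) by (cases "x < y"; cases "y < x") auto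
  have "Qinv d = x" unfolding Qinv_def using x(3) uniq by (rule the_equality)
  thus ?thesis using x by simp
qed


lemma upper_scalar:
  fixes K eps eta Delta :: real
  assumes eta: "eta > 0" and eps: "eps > 0" and K: "K \<le> 9/2" and D: "Delta > 0"
    and h: "1/8 * ((1 + sqrt (36 * eta + 1)) / eta)^2 \<le> eps"
  shows "Delta / (2 * eps) * (K + sqrt (K^2 + 2 * eps)) \<le> eta * Delta"
proof -
  define r where "r = sqrt (36 * eta + 1)"
  have r1: "r \<ge> 1" unfolding r_def using eta by simp
  have r2: "r^2 = 36 * eta + 1" unfolding r_def using eta by simp
  have "(1 + r)^2 / (8 * eta^2) \<le> eps" using h by (simp add: r_def power_divide)
  hence "(1 + r)^2 \<le> 8 * eps * eta^2" using eta by (simp add: divide_le_eq mult.commute mult.left_commute)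
  moreover have "(1 + r)^2 = 2 + 2*r + 36*eta" using r2 by (simp add: power2_eq_square algebra_simps)
  ultimately have A: "2 * eps * eta^2 \<ge> 1 + 9 * eta" using r1 by linarith
  have "2 * eps * eta * eta > 9 * eta" using A by (simp add: power2_eq_square)
  hence B: "2 * eps * eta > 9" using eta by simp
  define T where "T = 2 * eps * eta - K"
  have T0: "T \<ge> 0" using B K unfolding T_def by linarith
  have "2 * eta * K \<le> 9 * eta" using K eta by simp
  hence C: "1 \<le> 2 * eps * eta^2 - 2 * eta * K" using A by linarith
  have "K^2 + 2 * eps \<le> T^2"
  proof -
    have "2 * eps * 1 \<le> 2 * eps * (2 * eps * eta^2 - 2 * eta * K)"
      using C eps by (intro mult_left_mono) auto
    thus ?thesis unfolding T_def by (simp add: power2_eq_square algebra_simps)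
  qed
  hence "sqrt (K^2 + 2 * eps) \<le> T" using T0 by (simp add: real_sqrt_le_iff real_le_lsqrt)
  hence E: "K + sqrt (K^2 + 2 * eps) \<le> 2 * eps * eta" unfolding T_def by linarith
  have "Delta / (2 * eps) * (K + sqrt (K^2 + 2 * eps)) \<le> Delta / (2 * eps) * (2 * eps * eta)"
    using E D eps by (intro mult_left_mono) auto
  also have "\<dots> = eta * Delta" using eps by simp
  finally show ?thesis .
qed

lemma lower_scalar:
  fixes K eps eta Delta :: real
  assumes eta: "eta \<ge> 0" and eps: "eps > 0" and K: "1 \<le> K" and D: "Delta > 0"
    and h: "eps \<le> 1 / eta"
  shows "eta * Delta \<le> Delta / (2 * eps) * (K + sqrt (K^2 + 2 * eps))"
proof -
  have "K \<le> sqrt (K^2 + 2 * eps)" using K eps by (simp add: real_le_rsqrt)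
  hence a: "2 \<le> K + sqrt (K^2 + 2 * eps)" using K by linarith
  have "Delta / (2 * eps) * 2 \<le> Delta / (2 * eps) * (K + sqrt (K^2 + 2 * eps))"
    using a D eps by (intro mult_left_mono) auto
  moreover have "eta * Delta \<le> Delta / eps"
  proof (cases "eta = 0")
    case True thus ?thesis using D eps by simp
  next
    case False
    hence "eta > 0" using eta by simp
    hence "eps * eta \<le> 1" using h by (simp add: le_divide_eq)
    hence "eta \<le> 1 / eps" using eps by (simp add: le_divide_eq mult.commute)
    hence "eta * Delta \<le> (1 / eps) * Delta" using D by (intro mult_right_mono) auto
    thus ?thesis by simp
  qed
  ultimately show ?thesis using eps by simp
qed

theorem theorem6:
  fixes H W Sigma C :: "real^'n^'n"
    and D :: "real^'m^'n"
    and Delta delta eps B_l B_u :: real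
  assumes W_pd: "pd W"
    and C_diag: "diagonal_mat C"
    and C_nz: "\<forall>i. C $ i $ i \<noteq> 0"
    and obs: "observable H C"
    and ctrb: "controllable H D"
    and W_D: "W = D ** transpose D"
    and Delta_pos: "Delta > 0"
    and delta_lo: "10 powr (-5) \<le> delta" and delta_hi: "delta \<le> 10 powr (-1)"
    and eps_pos: "eps > 0"
  defines "K \<equiv> Qinv delta"
  defines "sig \<equiv> Delta / (2 * eps) * (K + sqrt (K^2 + 2 * eps))"
  defines "V \<equiv> (sig^2) *\<^sub>R (mat 1 :: real^'n^'n)"
  assumes Sigma_psd: "psd Sigma"
    and Sigma_ric: "Sigma = H ** Sigma ** transpose H
        - H ** Sigma ** transpose C ** matrix_inv (C ** Sigma ** transpose C + V)
            ** C ** Sigma ** transpose H + W"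
  defines "Sigmabar \<equiv> matrix_inv (transpose C ** matrix_inv V ** C + matrix_inv Sigma)"
  defines "n \<equiv> real CARD('n)"
  defines "Cl2 \<equiv> Min ((\<lambda>i. (C $ i $ i)^2) ` UNIV)"
  defines "Cu2 \<equiv> Max ((\<lambda>i. (C $ i $ i)^2) ` UNIV)"
  assumes Bl_pos: "0 < B_l" and Bl_lt: "B_l < n * lambda_min W"
    and Bu_pos: "0 < B_u"
  defines "eta2 \<equiv> sqrt (B_l * Cu2 / (Delta^2 * (n - B_l / lambda_min W)))"
  defines "eta4 \<equiv> sqrt (B_u * Cl2 / (n * Delta^2))"
  shows "(1/8 * ((1 + sqrt (36 * eta4 + 1)) / eta4)^2 \<le> eps \<longrightarrow> trace Sigmabar \<le> B_u)
       \<and> (eps \<le> 1 / eta2 \<longrightarrow> B_l \<le> trace Sigmabar)"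
proof -
  obtain m where m_pos: "m > 0" and mW: "\<forall>x. m * (x \<bullet> x) \<le> x \<bullet> (W *v x)"
    and lm: "lambda_min W \<le> m"
    using W_min[OF W_pd] by blast
  have dl: "1/100000 \<le> delta" using delta_lo by (simp add: powr_minus)
  have dh: "delta \<le> 1/10" using delta_hi by (simp add: powr_minus)
  have Kb: "1 \<le> K" "K \<le> 9/2" using Qinv_bounds[OF dl dh] unfolding K_def by auto
  have sqK: "K \<le> sqrt (K^2 + 2 * eps)" using Kb eps_pos by (simp add: real_le_rsqrt)
  have sig_pos: "sig > 0" unfolding sig_def using Delta_pos eps_pos Kb sqK by simp
  define s where "s = sig^2"
  have s_pos: "s > 0" unfolding s_def using sig_pos by simp
  have ric': "Sigma = H ** Sigma ** transpose H
        - H ** Sigma ** transpose C ** matrix_inv (C ** Sigma ** transpose C + s *\<^sub>R mat 1)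
            ** C ** Sigma ** transpose H + W"
    using Sigma_ric unfolding V_def s_def .
  have SB: "Sigmabar = matrix_inv (transpose C ** matrix_inv (s *\<^sub>R mat 1) ** C + matrix_inv Sigma)"
    unfolding Sigmabar_def V_def s_def ..
  note MM = main_matrix[OF W_pd C_diag C_nz s_pos Sigma_psd ric' m_pos mW, folded SB]
  have tr: "trace Sigmabar = (\<Sum>i\<in>UNIV. Sigmabar $ i $ i)" by (simp add: trace_def)
  have fin: "finite ((\<lambda>i. (C $ i $ i)^2) ` (UNIV :: 'n set))" by simp
  have ne: "((\<lambda>i. (C $ i $ i)^2) ` (UNIV :: 'n set)) \<noteq> {}" by simp
  have cl: "Cl2 \<le> (C$i$i)^2" for i unfolding Cl2_def by (rule Min_le[OF fin]) simp
  have cu: "(C$i$i)^2 \<le> Cu2" for i unfolding Cu2_def by (rule Max_ge[OF fin]) simp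
  have Cl2_pos: "Cl2 > 0"
  proof -
    have "Cl2 \<in> (\<lambda>i. (C $ i $ i)^2) ` UNIV" unfolding Cl2_def by (rule Min_in[OF fin ne])
    thus ?thesis using C_nz by auto
  qed
  have Cu2_pos: "Cu2 > 0" using cl[of undefined] cu[of undefined] Cl2_pos by linarith
  have n_pos: "n > 0" unfolding n_def by simp
  have sumc: "(\<Sum>i\<in>(UNIV::'n set). c) = n * c" for c :: real unfolding n_def by simp
  show ?thesis
  proof (intro conjI impI)
    assume hU: "1/8 * ((1 + sqrt (36 * eta4 + 1)) / eta4)^2 \<le> eps"
    have arg4: "B_u * Cl2 / (n * Delta^2) > 0" using Bu_pos Cl2_pos n_pos Delta_pos by simp
    have eta4_pos: "eta4 > 0" unfolding eta4_def using arg4 by simp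
    have "sig \<le> eta4 * Delta" unfolding sig_def by (rule upper_scalar[OF eta4_pos eps_pos Kb(2) Delta_pos hU])
    hence "sig^2 \<le> (eta4 * Delta)^2" using sig_pos by (intro power_mono) auto
    also have "\<dots> = B_u * Cl2 / n"
      unfolding eta4_def power_mult_distrib using arg4 Delta_pos by simp
    finally have sU: "s \<le> B_u * Cl2 / n" unfolding s_def .
    have "trace Sigmabar \<le> (\<Sum>i\<in>(UNIV::'n set). s / Cl2)"
      unfolding tr
    proof (rule sum_mono)
      fix i :: 'n
      have "Sigmabar $ i $ i \<le> s / (C$i$i)^2" by (rule MM(1))
      also have "\<dots> \<le> s / Cl2" using cl[of i] Cl2_pos s_pos using C_nz by (intro divide_left_mono) auto
      finally show "Sigmabar $ i $ i \<le> s / Cl2" .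
    qed
    also have "\<dots> = n * (s / Cl2)" by (rule sumc)
    also have "\<dots> \<le> n * ((B_u * Cl2 / n) / Cl2)"
      using sU Cl2_pos n_pos by (intro mult_left_mono divide_right_mono) auto
    also have "\<dots> = B_u" using Cl2_pos n_pos by simp
    finally show "trace Sigmabar \<le> B_u" .
  next
    assume hL: "eps \<le> 1 / eta2"
    define lam where "lam = lambda_min W"
    have lam_pos: "lam > 0"
    proof (rule ccontr)
      assume "\<not> lam > 0"
      hence "n * lam \<le> 0" using n_pos by (simp add: mult_nonneg_nonpos)
      thus False using Bl_lt Bl_pos unfolding lam_def by linarith
    qed
    have den_pos: "n - B_l / lam > 0" using Bl_lt lam_pos unfolding lam_def[symmetric]
      by (simp add: divide_less_eq mult.commute)
    have arg2: "B_l * Cu2 / (Delta^2 * (n - B_l / lam)) \<ge> 0" using Bl_pos Cu2_pos den_pos by simp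
    have eta2_nn: "eta2 \<ge> 0" unfolding eta2_def using arg2 unfolding lam_def by simp
    have "sig \<ge> eta2 * Delta" unfolding sig_def
      by (rule lower_scalar[OF eta2_nn eps_pos Kb(1) Delta_pos hL])
    hence "(eta2 * Delta)^2 \<le> sig^2" using Delta_pos eta2_nn by (intro power_mono) auto
    moreover have "(eta2 * Delta)^2 = B_l * Cu2 / (n - B_l / lam)"
    proof -
      have "B_l * Cu2 / (Delta^2 * (n - B_l / lam)) \<ge> 0" using Bl_pos Cu2_pos den_pos by simp
      hence "eta2^2 = B_l * Cu2 / (Delta^2 * (n - B_l / lam))" unfolding eta2_def lam_def by simp
      thus ?thesis using Delta_pos by (simp add: power_mult_distrib)
    qed
    ultimately have sL: "B_l * Cu2 / (n - B_l / lam) \<le> s" unfolding s_def by simp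
    have k1: "B_l * Cu2 / s \<le> n - B_l / lam"
      using sL s_pos den_pos by (simp add: divide_le_eq mult.commute)
    have k2: "B_l / m \<le> B_l / lam" using lm lam_pos Bl_pos unfolding lam_def[symmetric]
      by (intro divide_left_mono) auto
    have dpos: "Cu2 / s + 1/m > 0" using Cu2_pos s_pos m_pos by (simp add: add_pos_pos)
    have "B_l * (Cu2 / s + 1/m) \<le> n" using k1 k2 by (simp add: algebra_simps)
    hence "B_l \<le> n / (Cu2 / s + 1/m)" using dpos by (simp add: le_divide_eq)
    also have "\<dots> = (\<Sum>i\<in>(UNIV::'n set). 1 / (Cu2 / s + 1/m))" unfolding sumc by simp
    also have "\<dots> \<le> trace Sigmabar"
      unfolding tr
    proof (rule sum_mono)
      fix i :: 'n
      have p: "0 < (C$i$i)^2 / s + 1/m" using s_pos m_pos C_nz by (simp add: add_pos_pos)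
      have "1 / (Cu2 / s + 1/m) \<le> 1 / ((C$i$i)^2 / s + 1/m)"
        using cu[of i] s_pos p dpos by (intro divide_left_mono add_right_mono divide_right_mono) auto
      also have "\<dots> \<le> Sigmabar $ i $ i" by (rule MM(2))
      finally show "1 / (Cu2 / s + 1/m) \<le> Sigmabar $ i $ i" .
    qed
    finally show "B_l \<le> trace Sigmabar" .
  qed
qed

end
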